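(* Let $\mathsf{K}$ be a free simplicial $\mathbb{Z}_2$-complex and let $\lambda_1,\ldots,\lambda_m$ be Fan labelings of $\mathsf{K}$. For any choice of non-negative integers $d_1,\ldots,d_m$ with $d_1+\cdots+d_m=\operatorname{ind}(\mathsf{K})$, there exists a simplex $\sigma$ of $\mathsf{K}$ which, for each $i\in[m]$, has a $d_i$-dimensional face that is alternating with respect to $\lambda_i$.
   Context: A free simplicial $\mathbb{Z}_2$-complex is a simplicial complex with a free simplicial $\mathbb{Z}_2$-action (an involution without fixed points on its geometric realization). A Fan labeling is a labeling of its vertices by non-zero integers such that (i) no two adjacent vertices have labels summing to zero, and (ii) the two vertices of any orbit of the action have labels summing to zero. A simplex is alternating with respect to a labeling if the signs of the labels alternate when its vertices are ordered by increasing absolute value of their labels (in particular the labels have distinct absolute values). The $\mathbb{Z}_2$-index $\operatorname{ind}(\mathsf{K})$ is the minimal $d$ such that there exists a continuous map from (the geometric realization of) $\mathsf{K}$ to the sphere $\mathcal{S}^d$ commuting with the $\mathbb{Z}_2$-actions, the action on $\mathcal{S}^d$ being the antipodal map. *)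

theory Defs
  imports "HOL-Analysis.Analysis"
begin

definition simplicial_complex :: "'v set set \<Rightarrow> bool" where
  "simplicial_complex K \<longleftrightarrow> finite K \<and> (\<forall>\<sigma>\<in>K. \<sigma> \<noteq> {} \<and> finite \<sigma>) \<and>
     (\<forall>\<sigma>\<in>K. \<forall>\<tau>. \<tau> \<subseteq> \<sigma> \<and> \<tau> \<noteq> {} \<longrightarrow> \<tau> \<in> K)"

definition vertices :: "'v set set \<Rightarrow> 'v set" where
  "vertices K = \<Union>K"

text \<open>Geometric realization: points are barycentric coordinate functions whose support is a
  simplex; it carries the subspace topology of the product topology on 'v \<Rightarrow> real.\<close>
definition geom_real :: "'v set set \<Rightarrow> ('v \<Rightarrow> real) set" where
  "geom_real K = {f. (\<forall>v. 0 \<le> f v) \<and> {v. f v \<noteq> 0} \<in> K \<and> sum f {v. f v \<noteq> 0} = 1}"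

definition free_Z2_complex :: "'v set set \<Rightarrow> ('v \<Rightarrow> 'v) \<Rightarrow> bool" where
  "free_Z2_complex K \<nu> \<longleftrightarrow> simplicial_complex K \<and>
     (\<forall>v\<in>vertices K. \<nu> v \<in> vertices K \<and> \<nu> (\<nu> v) = v) \<and>
     (\<forall>\<sigma>\<in>K. \<nu> ` \<sigma> \<in> K) \<and>
     (\<forall>x\<in>geom_real K. x \<circ> \<nu> \<noteq> x)"

text \<open>The sphere S^d (d \<ge> -1 an integer), embedded in nat \<Rightarrow> real (coordinates 0..d);
  S^(-1) is empty.\<close>
definition sphere_d :: "int \<Rightarrow> (nat \<Rightarrow> real) set" where
  "sphere_d d = {x. (\<forall>i. d < int i \<longrightarrow> x i = 0) \<and> (\<Sum>i\<in>{i. int i \<le> d}. (x i)\<^sup>2) = 1}"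

definition Z2_index :: "'v set set \<Rightarrow> ('v \<Rightarrow> 'v) \<Rightarrow> int" where
  "Z2_index K \<nu> = (LEAST d::int. -1 \<le> d \<and> (\<exists>g :: ('v \<Rightarrow> real) \<Rightarrow> (nat \<Rightarrow> real).
      continuous_on (geom_real K) g \<and> g ` geom_real K \<subseteq> sphere_d d \<and>
      (\<forall>x\<in>geom_real K. g (x \<circ> \<nu>) = - g x)))"

definition fan_labeling :: "'v set set \<Rightarrow> ('v \<Rightarrow> 'v) \<Rightarrow> ('v \<Rightarrow> int) \<Rightarrow> bool" where
  "fan_labeling K \<nu> lab \<longleftrightarrow>
     (\<forall>v\<in>vertices K. lab v \<noteq> 0) \<and>
     (\<forall>u v. {u, v} \<in> K \<and> u \<noteq> v \<longrightarrow> lab u + lab v \<noteq> 0) \<and>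
     (\<forall>v\<in>vertices K. lab v + lab (\<nu> v) = 0)"

definition alternating :: "('v \<Rightarrow> int) \<Rightarrow> 'v set \<Rightarrow> bool" where
  "alternating lab \<tau> \<longleftrightarrow> inj_on (\<lambda>v. \<bar>lab v\<bar>) \<tau> \<and>
     (\<forall>u\<in>\<tau>. \<forall>w\<in>\<tau>. \<bar>lab u\<bar> < \<bar>lab w\<bar> \<and>
        \<not> (\<exists>x\<in>\<tau>. \<bar>lab u\<bar> < \<bar>lab x\<bar> \<and> \<bar>lab x\<bar> < \<bar>lab w\<bar>)
        \<longrightarrow> sgn (lab u) \<noteq> sgn (lab w))"

end

theory Submission
  imports Defs "HOL-Computational_Algebra.Polynomial"
begin

lemma alt_remove_max:
  assumes "alternating lab \<tau>" "u \<in> \<tau>" "\<forall>x\<in>\<tau>. \<bar>lab x\<bar> \<le> \<bar>lab u\<bar>"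
  shows "alternating lab (\<tau> - {u})"
  unfolding alternating_def
proof (intro conjI ballI impI)
  show "inj_on (\<lambda>v. \<bar>lab v\<bar>) (\<tau> - {u})"
    using assms(1) unfolding alternating_def by (meson inj_on_diff)
next
  fix a b assume a: "a \<in> \<tau> - {u}" and b: "b \<in> \<tau> - {u}"
    and h: "\<bar>lab a\<bar> < \<bar>lab b\<bar> \<and> \<not> (\<exists>x\<in>\<tau> - {u}. \<bar>lab a\<bar> < \<bar>lab x\<bar> \<and> \<bar>lab x\<bar> < \<bar>lab b\<bar>)"
  have "\<bar>lab b\<bar> \<le> \<bar>lab u\<bar>" using assms(3) b by blast
  then have "\<not> (\<exists>x\<in>\<tau>. \<bar>lab a\<bar> < \<bar>lab x\<bar> \<and> \<bar>lab x\<bar> < \<bar>lab b\<bar>)"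
    using h by auto
  then show "sgn (lab a) \<noteq> sgn (lab b)"
    using assms(1) a b h unfolding alternating_def by blast
qed

lemma alt_insert_top:
  assumes "alternating lab \<tau>" "t \<in> \<tau>" "\<forall>x\<in>\<tau>. \<bar>lab x\<bar> \<le> \<bar>lab t\<bar>"
    "\<bar>lab t\<bar> < \<bar>lab w\<bar>" "sgn (lab t) \<noteq> sgn (lab w)"
  shows "alternating lab (insert w \<tau>)"
proof -
  have wn: "w \<notin> \<tau>" using assms(3,4) by force
  have inj: "inj_on (\<lambda>v. \<bar>lab v\<bar>) (insert w \<tau>)"
  proof -
    have "inj_on (\<lambda>v. \<bar>lab v\<bar>) \<tau>" using assms(1) unfolding alternating_def by blast
    moreover have "\<bar>lab w\<bar> \<notin> (\<lambda>v. \<bar>lab v\<bar>) ` \<tau>" using assms(3,4) by force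
    ultimately show ?thesis using wn by simp
  qed
  show ?thesis
    unfolding alternating_def
  proof (intro conjI inj ballI impI)
    fix u v assume u: "u \<in> insert w \<tau>" and v: "v \<in> insert w \<tau>"
      and h: "\<bar>lab u\<bar> < \<bar>lab v\<bar> \<and> \<not> (\<exists>x\<in>insert w \<tau>. \<bar>lab u\<bar> < \<bar>lab x\<bar> \<and> \<bar>lab x\<bar> < \<bar>lab v\<bar>)"
    show "sgn (lab u) \<noteq> sgn (lab v)"
    proof (cases "v = w")
      case True
      then have "u \<in> \<tau>" using u h by auto
      have "\<bar>lab t\<bar> \<le> \<bar>lab u\<bar>"
      proof (rule ccontr)
        assume "\<not> \<bar>lab t\<bar> \<le> \<bar>lab u\<bar>"
        then show False using h assms(2,4) True by auto
      qed
      then have "\<bar>lab u\<bar> = \<bar>lab t\<bar>" using assms(3) \<open>u \<in> \<tau>\<close> by force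
      then have "u = t" using inj assms(2) \<open>u \<in> \<tau>\<close> by (auto dest: inj_onD)
      then show ?thesis using True assms(5) by simp
    next
      case False
      then have "v \<in> \<tau>" using v by auto
      then have "u \<in> \<tau>" using u h assms(3,4) by force
      then show ?thesis using h \<open>v \<in> \<tau>\<close> assms(1) unfolding alternating_def by blast
    qed
  qed
qed

lemma alt_sizes:
  assumes "finite \<tau>" "alternating lab \<tau>" "k \<le> card \<tau>"
  shows "\<exists>\<tau>'\<subseteq>\<tau>. card \<tau>' = k \<and> alternating lab \<tau>'"
  using assms
proof (induction "card \<tau>" arbitrary: \<tau> rule: less_induct)
  case less
  show ?case
  proof (cases "k = card \<tau>")
    case True then show ?thesis using less by blast
  next
    case False
    then have ne: "\<tau> \<noteq> {}" using less by auto
    have "Max ((\<lambda>v. \<bar>lab v\<bar>) ` \<tau>) \<in> (\<lambda>v. \<bar>lab v\<bar>) ` \<tau>"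
      using less(2) ne by (intro Max_in) auto
    then obtain u where u: "u \<in> \<tau>" "\<bar>lab u\<bar> = Max ((\<lambda>v. \<bar>lab v\<bar>) ` \<tau>)"
      by force
    have mx: "\<forall>x\<in>\<tau>. \<bar>lab x\<bar> \<le> \<bar>lab u\<bar>" using u less(2) by simp
    have a: "alternating lab (\<tau> - {u})" using alt_remove_max[OF less(3) u(1) mx] .
    have c: "card (\<tau> - {u}) < card \<tau>" using u less(2) by (simp add: card_gt_0_iff ne)
    have "k \<le> card (\<tau> - {u})" using False less(4) u less(2) by auto
    then obtain \<tau>' where "\<tau>' \<subseteq> \<tau> - {u}" "card \<tau>' = k" "alternating lab \<tau>'"
      using less(1)[OF c _ a] less(2) by blast
    then show ?thesis by blast
  qed
qed



lemma sign_aux: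
  fixes s p c :: real
  assumes "(- s) * p > 0" "c < 0"
  shows "s * (p * c) > 0"
proof -
  have eq: "s * (p * c) = ((- s) * p) * (- c)" by simp
  have "s * p < 0" using assms(1) by simp
  then have "(s * p) * c > 0" using mult_neg_neg assms(2) by blast
  then show ?thesis by (simp add: mult.assoc)
qed

lemma comb:
  fixes lab :: "'v \<Rightarrow> int"
  assumes "finite S" "S \<noteq> {}" "\<forall>v\<in>S. lab v \<noteq> 0"
    "\<forall>u\<in>S. \<forall>w\<in>S. \<bar>lab u\<bar> = \<bar>lab w\<bar> \<longrightarrow> lab u = lab w"
  shows "\<exists>P::real poly. \<exists>\<tau>\<subseteq>S. \<exists>t\<in>\<tau>. alternating lab \<tau> \<and> degree P < card \<tau> \<and>
    (\<forall>v\<in>S. \<bar>lab v\<bar> \<le> \<bar>lab t\<bar>) \<and>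
    (\<forall>v\<in>S. real_of_int (sgn (lab v)) * poly P (real_of_int \<bar>lab v\<bar>) > 0) \<and>
    (\<forall>r::real. real_of_int \<bar>lab t\<bar> \<le> r \<longrightarrow> real_of_int (sgn (lab t)) * poly P r > 0)"
  using assms
proof (induction "card S" arbitrary: S rule: less_induct)
  case less
  define A where "A = Max ((\<lambda>v. \<bar>lab v\<bar>) ` S)"
  have "A \<in> (\<lambda>v. \<bar>lab v\<bar>) ` S" unfolding A_def using less(2,3) by (intro Max_in) auto
  then obtain w where w: "w \<in> S" "\<bar>lab w\<bar> = A" by force
  have wmax: "\<forall>v\<in>S. \<bar>lab v\<bar> \<le> A" unfolding A_def using less(2) by simp
  define sA where "sA = sgn (lab w)"
  have sA: "sA = 1 \<or> sA = -1" using less(4) w(1) unfolding sA_def by (auto simp: sgn_if)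
  define Ob where "Ob = {v\<in>S. sgn (lab v) \<noteq> sA}"
  show ?case
  proof (cases "Ob = {}")
    case True
    have sgnS: "\<forall>v\<in>S. sgn (lab v) = sA" using True unfolding Ob_def by auto
    have alt: "alternating lab {w}" unfolding alternating_def by auto
    have pos: "real_of_int sA * real_of_int sA > 0" using sA by auto
    show ?thesis
    proof (intro exI[of _ "[:real_of_int sA:]"] exI[of _ "{w}"] conjI bexI[of _ w])
      show "{w} \<subseteq> S" using w by simp
      show "w \<in> {w}" by simp
      show "alternating lab {w}" using alt .
      show "degree [:real_of_int sA:] < card {w}" by simp
      show "\<forall>v\<in>S. \<bar>lab v\<bar> \<le> \<bar>lab w\<bar>" using wmax w by simp
      show "\<forall>v\<in>S. real_of_int (sgn (lab v)) * poly [:real_of_int sA:] (real_of_int \<bar>lab v\<bar>) > 0"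
        using sgnS pos by simp
      show "\<forall>r::real. real_of_int \<bar>lab w\<bar> \<le> r \<longrightarrow> real_of_int (sgn (lab w)) * poly [:real_of_int sA:] r > 0"
        unfolding sA_def[symmetric] using pos by simp
    qed
  next
    case False
    define B where "B = Max ((\<lambda>v. \<bar>lab v\<bar>) ` Ob)"
    have fO: "finite Ob" using less(2) unfolding Ob_def by simp
    have "B \<in> (\<lambda>v. \<bar>lab v\<bar>) ` Ob" unfolding B_def using fO False by (intro Max_in) auto
    then obtain ob where ob: "ob \<in> Ob" "\<bar>lab ob\<bar> = B" by force
    have Omax: "\<forall>v\<in>Ob. \<bar>lab v\<bar> \<le> B" unfolding B_def using fO by simp
    have obS: "ob \<in> S" "sgn (lab ob) \<noteq> sA" using ob(1) unfolding Ob_def by auto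
    have BA: "B < A"
    proof -
      have "B \<le> A" using wmax obS ob(2) by auto
      moreover have "B \<noteq> A"
      proof
        assume "B = A"
        then have "\<bar>lab ob\<bar> = \<bar>lab w\<bar>" using w ob(2) by simp
        then have "lab ob = lab w" using less(5) obS(1) w(1) by blast
        then show False using obS(2) sA_def by simp
      qed
      ultimately show ?thesis by simp
    qed
    define S' where "S' = {v\<in>S. \<bar>lab v\<bar> \<le> B}"
    have S'S: "S' \<subseteq> S" unfolding S'_def by auto
    have wS': "w \<notin> S'" unfolding S'_def using w BA by auto
    have cS': "card S' < card S"
      using S'S wS' w(1) less(2) by (intro psubset_card_mono) auto
    have obS': "ob \<in> S'" unfolding S'_def using obS ob(2) by auto
    obtain P' \<tau>' t' where IH: "\<tau>' \<subseteq> S'" "t' \<in> \<tau>'" "alternating lab \<tau>'" "degree P' < card \<tau>'"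
      "\<forall>v\<in>S'. \<bar>lab v\<bar> \<le> \<bar>lab t'\<bar>"
      "\<forall>v\<in>S'. real_of_int (sgn (lab v)) * poly P' (real_of_int \<bar>lab v\<bar>) > 0"
      "\<forall>r::real. real_of_int \<bar>lab t'\<bar> \<le> r \<longrightarrow> real_of_int (sgn (lab t')) * poly P' r > 0"
      using less(1)[OF cS'] less(2,4,5) S'S obS' finite_subset[OF S'S] by blast
    have fS': "finite S'" using finite_subset[OF S'S] less(2) .
    have fT': "finite \<tau>'" using finite_subset[OF IH(1) fS'] .
    have t'S': "t' \<in> S'" using IH(1,2) by auto
    have t'B: "\<bar>lab t'\<bar> = B"
    proof -
      have "\<bar>lab t'\<bar> \<le> B" using t'S' unfolding S'_def by auto
      moreover have "B \<le> \<bar>lab t'\<bar>" using IH(5) obS' ob(2) by auto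
      ultimately show ?thesis by simp
    qed
    have t'S: "t' \<in> S" using t'S' S'S by auto
    have "\<bar>lab t'\<bar> = \<bar>lab ob\<bar>" using t'B ob(2) by simp
    then have "lab t' = lab ob" using less(5) t'S obS(1) by blast
    then have st': "sgn (lab t') = - sA" using obS(2) sA less(4) obS(1) by (auto simp: sgn_if)
    have P'nz: "P' \<noteq> 0" using IH(6) t'S' by auto
    define P where "P = P' * [:real_of_int B + 1/2, -1:]"
    have polyP: "\<And>r. poly P r = poly P' r * (real_of_int B + 1/2 - r)"
      unfolding P_def by (simp add: algebra_simps)
    have degP: "degree P = degree P' + 1"
      unfolding P_def using P'nz by (subst degree_mult_eq) auto
    have wT': "w \<notin> \<tau>'" using IH(1) wS' by auto
    have cardT: "card (insert w \<tau>') = card \<tau>' + 1" using wT' fT' by simp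
    have tmax: "\<forall>x\<in>\<tau>'. \<bar>lab x\<bar> \<le> \<bar>lab t'\<bar>" using IH(1,5) by auto
    have alt: "alternating lab (insert w \<tau>')"
      using alt_insert_top[OF IH(3) IH(2) tmax] t'B BA w(2) st' sA sA_def by auto
    have big: "real_of_int sA * poly P r > 0" if r: "real_of_int B + 1 \<le> r" for r
    proof -
      have "real_of_int (sgn (lab t')) * poly P' r > 0" using IH(7) r t'B by auto
      then have "(- real_of_int sA) * poly P' r > 0" using st' by simp
      then show ?thesis unfolding polyP using r by (intro sign_aux) auto
    qed
    show ?thesis
    proof (intro exI[of _ P] exI[of _ "insert w \<tau>'"] conjI bexI[of _ w])
      show "insert w \<tau>' \<subseteq> S" using IH(1) S'S w(1) by auto
      show "w \<in> insert w \<tau>'" by simp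
      show "alternating lab (insert w \<tau>')" using alt .
      show "degree P < card (insert w \<tau>')" using degP cardT IH(4) by simp
      show "\<forall>v\<in>S. \<bar>lab v\<bar> \<le> \<bar>lab w\<bar>" using wmax w by simp
      show "\<forall>v\<in>S. real_of_int (sgn (lab v)) * poly P (real_of_int \<bar>lab v\<bar>) > 0"
      proof
        fix v assume v: "v \<in> S"
        show "real_of_int (sgn (lab v)) * poly P (real_of_int \<bar>lab v\<bar>) > 0"
        proof (cases "\<bar>lab v\<bar> \<le> B")
          case True
          then have "v \<in> S'" unfolding S'_def using v by auto
          then have "real_of_int (sgn (lab v)) * poly P' (real_of_int \<bar>lab v\<bar>) > 0" using IH(6) by blast
          moreover have "real_of_int B + 1/2 - real_of_int \<bar>lab v\<bar> > 0" using True by linarith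
          ultimately show ?thesis unfolding polyP
            by (metis mult.assoc mult_pos_pos)
        next
          case False
          then have "v \<notin> Ob" using Omax by auto
          then have "sgn (lab v) = sA" using v unfolding Ob_def by auto
          moreover have "real_of_int B + 1 \<le> real_of_int \<bar>lab v\<bar>" using False by linarith
          ultimately show ?thesis using big by simp
        qed
      qed
      show "\<forall>r::real. real_of_int \<bar>lab w\<bar> \<le> r \<longrightarrow> real_of_int (sgn (lab w)) * poly P r > 0"
      proof (intro allI impI)
        fix r :: real assume "real_of_int \<bar>lab w\<bar> \<le> r"
        then have "real_of_int B + 1 \<le> r" using w(2) BA by linarith
        then show "real_of_int (sgn (lab w)) * poly P r > 0" using big sA_def by simp
      qed
    qed
  qed
qed

lemma least_le_aux:
  fixes Pr :: "int \<Rightarrow> bool"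
  assumes "Pr d0" "\<And>d. Pr d \<Longrightarrow> -1 \<le> d"
  shows "(LEAST d. Pr d) \<le> d0"
proof -
  define D where "D = {d. Pr d \<and> d \<le> d0}"
  have fD: "finite D" unfolding D_def
    by (rule finite_subset[of _ "{-1..d0}"]) (auto dest: assms(2))
  have neD: "D \<noteq> {}" using assms(1) unfolding D_def by auto
  define m0 where "m0 = Min D"
  have m0D: "m0 \<in> D" unfolding m0_def using fD neD by (rule Min_in)
  have "(LEAST d. Pr d) = m0"
  proof (rule Least_equality)
    show "Pr m0" using m0D unfolding D_def by auto
    fix y assume "Pr y"
    show "m0 \<le> y"
    proof (cases "y \<le> d0")
      case True then have "y \<in> D" using \<open>Pr y\<close> unfolding D_def by auto
      then show ?thesis unfolding m0_def using fD by simp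
    next
      case False then show ?thesis using m0D unfolding D_def by auto
    qed
  qed
  then show ?thesis using m0D unfolding D_def by auto
qed

lemma cont_coord: "continuous_on S (\<lambda>x::'a \<Rightarrow> real. x v)"
  by (rule continuous_on_subset[OF continuous_on_product_coordinates]) auto

theorem theorem3p1:
  fixes K :: "'v set set" and \<nu> :: "'v \<Rightarrow> 'v"
    and lab :: "nat \<Rightarrow> 'v \<Rightarrow> int" and d :: "nat \<Rightarrow> nat" and m :: nat
  assumes "free_Z2_complex K \<nu>"
    and "\<forall>i\<in>{1..m}. fan_labeling K \<nu> (lab i)"
    and "(\<Sum>i\<in>{1..m}. int (d i)) = Z2_index K \<nu>"
  shows "\<exists>\<sigma>\<in>K. \<forall>i\<in>{1..m}. \<exists>\<tau>. \<tau> \<subseteq> \<sigma> \<and> card \<tau> = d i + 1 \<and> alternating (lab i) \<tau>"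
proof (rule ccontr)
  assume neg: "\<not> ?thesis"
  note fz = assms(1) and fan = assms(2)
  have sc: "simplicial_complex K" using fz unfolding free_Z2_complex_def by blast
  define V where "V = vertices K"
  have fV: "finite V" using sc unfolding V_def vertices_def simplicial_complex_def by auto
  have nuV: "\<forall>v\<in>V. \<nu> v \<in> V \<and> \<nu> (\<nu> v) = v" using fz unfolding free_Z2_complex_def V_def by blast
  have injnu: "inj_on \<nu> V" by (metis inj_onI nuV)
  have imnu: "\<nu> ` V = V"
  proof
    show "\<nu> ` V \<subseteq> V" using nuV by auto
    show "V \<subseteq> \<nu> ` V" using nuV by (metis image_eqI subsetI)
  qed
  have labnu: "lab i (\<nu> v) = - lab i v" if "i \<in> {1..m}" "v \<in> V" for i v
    using fan that unfolding fan_labeling_def V_def by force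
  define k where "k = (\<Sum>i\<in>{1..m}. d i)"
  define Pset where "Pset = Sigma {1..m} (\<lambda>i. {..<d i})"
  have fP: "finite Pset" unfolding Pset_def by auto
  have cP: "card Pset = k" unfolding Pset_def k_def by (simp add: card_SigmaI)
  obtain h where h: "bij_betw h {0..<k} Pset" using ex_bij_betw_nat_finite[OF fP] cP by auto
  have hP: "h j \<in> Pset" if "j < k" for j using h that unfolding bij_betw_def by auto
  define c where "c = (\<lambda>(q::nat\<times>nat) v. real_of_int (sgn (lab (fst q) v)) * real_of_int \<bar>lab (fst q) v\<bar> ^ snd q)"
  define F where "F = (\<lambda>q (x::'v \<Rightarrow> real). \<Sum>v\<in>V. x v * c q v)"
  define N where "N = (\<lambda>x. sqrt (\<Sum>j<k. (F (h j) x)\<^sup>2))"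
  define g where "g = (\<lambda>x. (\<lambda>j. if j < k then F (h j) x / N x else 0))"
  have sumh: "(\<Sum>j<k. G (h j)) = (\<Sum>q\<in>Pset. G q)" for G :: "nat \<times> nat \<Rightarrow> real"
    using sum.reindex_bij_betw[OF h, of G] by (simp add: atLeast0LessThan)
  have key: "\<exists>q\<in>Pset. F q x \<noteq> 0" if x: "x \<in> geom_real K" for x
  proof -
    define \<sigma> where "\<sigma> = {v. x v \<noteq> 0}"
    have xnn: "\<forall>v. 0 \<le> x v" and \<sigma>K: "\<sigma> \<in> K" using x unfolding geom_real_def \<sigma>_def by auto
    have \<sigma>ne: "\<sigma> \<noteq> {}" "finite \<sigma>" using sc \<sigma>K unfolding simplicial_complex_def by auto
    have \<sigma>V: "\<sigma> \<subseteq> V" using \<sigma>K unfolding V_def vertices_def by auto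
    obtain i where i: "i \<in> {1..m}"
      and noalt: "\<not> (\<exists>\<tau>. \<tau> \<subseteq> \<sigma> \<and> card \<tau> = d i + 1 \<and> alternating (lab i) \<tau>)"
      using neg \<sigma>K by blast
    have fl: "fan_labeling K \<nu> (lab i)" using fan i by blast
    have nz: "\<forall>v\<in>\<sigma>. lab i v \<noteq> 0" using fl \<sigma>V unfolding fan_labeling_def V_def by blast
    have cons: "\<forall>u\<in>\<sigma>. \<forall>w\<in>\<sigma>. \<bar>lab i u\<bar> = \<bar>lab i w\<bar> \<longrightarrow> lab i u = lab i w"
    proof (intro ballI impI)
      fix u w assume u: "u \<in> \<sigma>" and w: "w \<in> \<sigma>" and e: "\<bar>lab i u\<bar> = \<bar>lab i w\<bar>"
      show "lab i u = lab i w"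
      proof (cases "u = w")
        case True then show ?thesis by simp
      next
        case False
        have "{u, w} \<subseteq> \<sigma>" "{u, w} \<noteq> {}" using u w by auto
        then have "{u, w} \<in> K" using sc \<sigma>K unfolding simplicial_complex_def by blast
        then have "lab i u + lab i w \<noteq> 0" using fl False unfolding fan_labeling_def by blast
        then show ?thesis using e by linarith
      qed
    qed
    obtain P \<tau> t where \<tau>: "\<tau> \<subseteq> \<sigma>" "t \<in> \<tau>" "alternating (lab i) \<tau>" "degree P < card \<tau>"
      and pos: "\<forall>v\<in>\<sigma>. real_of_int (sgn (lab i v)) * poly P (real_of_int \<bar>lab i v\<bar>) > 0"
      using comb[OF \<sigma>ne(2) \<sigma>ne(1) nz cons] by blast
    have "card \<tau> \<le> d i"
    proof (rule ccontr)
      assume "\<not> card \<tau> \<le> d i"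
      then obtain \<tau>' where "\<tau>' \<subseteq> \<tau>" "card \<tau>' = d i + 1" "alternating (lab i) \<tau>'"
        using alt_sizes[OF finite_subset[OF \<tau>(1) \<sigma>ne(2)] \<tau>(3), of "d i + 1"] by auto
      then show False using noalt \<tau>(1) by blast
    qed
    then have degP: "degree P < d i" using \<tau>(4) by simp
    define s where "s = (\<lambda>v. real_of_int (sgn (lab i v)))"
    define a where "a = (\<lambda>v. real_of_int \<bar>lab i v\<bar>)"
    have "0 < (\<Sum>v\<in>\<sigma>. x v * (s v * poly P (a v)))"
    proof (rule sum_pos[OF \<sigma>ne(2) \<sigma>ne(1)])
      fix v assume v: "v \<in> \<sigma>"
      then have "x v > 0" using xnn unfolding \<sigma>_def by (simp add: order_less_le)
      then show "0 < x v * (s v * poly P (a v))" using pos v unfolding s_def a_def by simp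
    qed
    also have "\<dots> = (\<Sum>v\<in>V. x v * (s v * poly P (a v)))"
      by (rule sum.mono_neutral_left[OF fV \<sigma>V]) (auto simp: \<sigma>_def)
    also have "\<dots> = (\<Sum>v\<in>V. \<Sum>p\<le>degree P. coeff P p * (x v * (s v * a v ^ p)))"
      unfolding poly_altdef by (intro sum.cong refl) (simp add: sum_distrib_left algebra_simps)
    also have "\<dots> = (\<Sum>p\<le>degree P. \<Sum>v\<in>V. coeff P p * (x v * (s v * a v ^ p)))"
      by (rule sum.swap)
    also have "\<dots> = (\<Sum>p\<le>degree P. coeff P p * F (i, p) x)"
      unfolding F_def c_def s_def a_def by (simp add: sum_distrib_left)
    finally have "(\<Sum>p\<le>degree P. coeff P p * F (i, p) x) \<noteq> 0" by simp
    then obtain p where p: "p \<le> degree P" "F (i, p) x \<noteq> 0"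
      by (metis (no_types, lifting) mult_zero_right sum.neutral atMost_iff)
    then have "(i, p) \<in> Pset" using i degP unfolding Pset_def by auto
    then show ?thesis using p(2) by blast
  qed
  have Npos: "N x > 0" if x: "x \<in> geom_real K" for x
  proof -
    obtain q where q: "q \<in> Pset" "F q x \<noteq> 0" using key[OF x] by blast
    have "(\<Sum>q\<in>Pset. (F q x)\<^sup>2) > 0"
      by (rule sum_pos2[OF fP q(1)]) (use q(2) in auto)
    then show ?thesis unfolding N_def using sumh[of "\<lambda>q. (F q x)\<^sup>2"] by simp
  qed
  have cF: "continuous_on A (F q)" for A q
    unfolding F_def by (intro continuous_intros cont_coord)
  have cont: "continuous_on (geom_real K) g"
    unfolding g_def
  proof (intro continuous_on_coordinatewise_then_product)
    fix j
    show "continuous_on (geom_real K) (\<lambda>x. if j < k then F (h j) x / N x else 0)"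
    proof (cases "j < k")
      case True
      have cN: "continuous_on (geom_real K) N" unfolding N_def by (intro continuous_intros cF)
      have Nne: "\<forall>x\<in>geom_real K. N x \<noteq> 0" using Npos by (metis less_irrefl)
      have "continuous_on (geom_real K) (\<lambda>x. F (h j) x / N x)"
        by (rule continuous_on_divide[OF cF cN]) (use Nne in auto)
      then show ?thesis using True by simp
    next
      case False then show ?thesis by simp
    qed
  qed
  have sph: "g x \<in> sphere_d (int k - 1)" if x: "x \<in> geom_real K" for x
  proof -
    have set: "{i. int i \<le> int k - 1} = {..<k}" by auto
    have N2: "(N x)\<^sup>2 = (\<Sum>j<k. (F (h j) x)\<^sup>2)" unfolding N_def
      by (simp add: sum_nonneg)
    have "(\<Sum>i<k. (g x i)\<^sup>2) = (\<Sum>i<k. (F (h i) x)\<^sup>2 / (N x)\<^sup>2)"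
      unfolding g_def by (simp add: power_divide)
    also have "\<dots> = (\<Sum>i<k. (F (h i) x)\<^sup>2) / (N x)\<^sup>2" by (simp add: sum_divide_distrib)
    also have "\<dots> = 1" using N2[symmetric] Npos[OF x] by simp
    finally show ?thesis unfolding sphere_d_def set g_def by auto
  qed
  have Fnu: "F q (x \<circ> \<nu>) = - F q x" if q: "q \<in> Pset" for q x
  proof -
    have i: "fst q \<in> {1..m}" using q unfolding Pset_def by auto
    have cnu: "c q (\<nu> v) = - c q v" if "v \<in> V" for v
      unfolding c_def using labnu[OF i that] by (simp add: case_prod_beta sgn_minus)
    have "F q (x \<circ> \<nu>) = (\<Sum>v\<in>V. x (\<nu> v) * - c q (\<nu> v))"
      unfolding F_def by (intro sum.cong) (auto simp: cnu nuV)
    also have "\<dots> = (\<Sum>w\<in>\<nu> ` V. x w * - c q w)"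
      by (rule sum.reindex[OF injnu, symmetric, unfolded comp_def])
    also have "\<dots> = - F q x" unfolding imnu F_def by (simp add: sum_negf)
    finally show ?thesis .
  qed
  have equiv: "g (x \<circ> \<nu>) = - g x" for x
  proof -
    have "N (x \<circ> \<nu>) = N x" unfolding N_def using Fnu hP by simp
    then show ?thesis unfolding g_def using Fnu hP by (auto simp: fun_eq_iff)
  qed
  have Pr: "-1 \<le> int k - 1 \<and> (\<exists>g :: ('v \<Rightarrow> real) \<Rightarrow> (nat \<Rightarrow> real).
      continuous_on (geom_real K) g \<and> g ` geom_real K \<subseteq> sphere_d (int k - 1) \<and>
      (\<forall>x\<in>geom_real K. g (x \<circ> \<nu>) = - g x))"
    using cont sph equiv by auto
  have "Z2_index K \<nu> \<le> int k - 1"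
    unfolding Z2_index_def
    by (rule least_le_aux[where Pr="\<lambda>d. -1 \<le> d \<and> (\<exists>g :: ('v \<Rightarrow> real) \<Rightarrow> (nat \<Rightarrow> real).
      continuous_on (geom_real K) g \<and> g ` geom_real K \<subseteq> sphere_d d \<and>
      (\<forall>x\<in>geom_real K. g (x \<circ> \<nu>) = - g x))", OF Pr]) auto
  moreover have "Z2_index K \<nu> = int k" using assms(3) unfolding k_def by simp
  ultimately show False by simp
qed

end
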